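(* Let $G$ be a group and let $(\mu_i,\lambda_i)$, $i\in I\cup J$, be pairs of commuting elements of $G$ (with $I,J$ index sets). Let $j_0\in J$, let $p,q$ be relatively prime integers, and let $N$ be the normal subgroup of $G$ generated by $\mu_{j_0}^p\lambda_{j_0}^q$. Let $s_i\in\mathbb{RP}^1$ for $i\in I$ and $s_j\in\mathbb{QP}^1$ for $j\in J$ be slopes with $s_{j_0}=[p:q]$. Then the following are equivalent: (a) there is a left total preorder $\le_0$ on $G$ such that $s_i$ is weakly $\le_0$-detected with respect to $(\mu_i,\lambda_i)$ for every $i\in I$, and $s_j$ is strongly $\le_0$-detected with respect to $(\mu_j,\lambda_j)$ for every $j\in J$; (b) there is a left total preorder $\le$ on $G/N$ such that $s_i$ is weakly $\le$-detected with respect to $(\mu_iN,\lambda_iN)$ for every $i\in I$, and $s_j$ is strongly $\le$-detected with respect to $(\mu_jN,\lambda_jN)$ for every $j\in J\setminus\{j_0\}$.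
   Context: A left total preorder on a group $G$ is a binary relation $\le$ on $G$ that is reflexive, transitive, total ($x\le y$ or $y\le x$ for all $x,y$), left-invariant ($x\le y\Rightarrow gx\le gy$), and proper, i.e. not the trivial relation in which $x\le y$ for all $x,y$. Its residue group is $\{g\in G: g\le 1 \text{ and } 1\le g\}$. For commuting $\mu,\lambda\in G$, a slope $[x:y]\in\mathbb{RP}^1$ is weakly $\le$-detected with respect to $(\mu,\lambda)$ if $\mu^{p_2}\lambda^{q_2}\ge 1$ for all integers $p_1,q_1,p_2,q_2$ with $\mu^{p_1}\lambda^{q_1}\ge 1$ and $(p_1y-q_1x)(p_2y-q_2x)>0$. A slope $[p:q]\in\mathbb{QP}^1$ ($p,q$ relatively prime integers) is strongly $\le$-detected with respect to $(\mu,\lambda)$ if every conjugate of $\mu^p\lambda^q$ lies in the residue group of $\le$. *)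

theory Defs
  imports "HOL-Algebra.Algebra"
begin

definition left_total_preorder :: "('a, 'b) monoid_scheme \<Rightarrow> ('a \<Rightarrow> 'a \<Rightarrow> bool) \<Rightarrow> bool" where
  "left_total_preorder G R \<longleftrightarrow>
     (\<forall>x\<in>carrier G. R x x) \<and>
     (\<forall>x\<in>carrier G. \<forall>y\<in>carrier G. \<forall>z\<in>carrier G. R x y \<longrightarrow> R y z \<longrightarrow> R x z) \<and>
     (\<forall>x\<in>carrier G. \<forall>y\<in>carrier G. R x y \<or> R y x) \<and>
     (\<forall>g\<in>carrier G. \<forall>x\<in>carrier G. \<forall>y\<in>carrier G. R x y \<longrightarrow> R (g \<otimes>\<^bsub>G\<^esub> x) (g \<otimes>\<^bsub>G\<^esub> y)) \<and>
     \<not> (\<forall>x\<in>carrier G. \<forall>y\<in>carrier G. R x y)"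

definition residue_group :: "('a, 'b) monoid_scheme \<Rightarrow> ('a \<Rightarrow> 'a \<Rightarrow> bool) \<Rightarrow> 'a set" where
  "residue_group G R = {g \<in> carrier G. R g \<one>\<^bsub>G\<^esub> \<and> R \<one>\<^bsub>G\<^esub> g}"

text \<open>A slope [x:y] in RP^1 is represented by a nonzero real pair (x,y); the condition is
  invariant under nonzero rescaling.\<close>
definition weakly_detected ::
  "('a, 'b) monoid_scheme \<Rightarrow> ('a \<Rightarrow> 'a \<Rightarrow> bool) \<Rightarrow> 'a \<Rightarrow> 'a \<Rightarrow> real \<times> real \<Rightarrow> bool" where
  "weakly_detected G R \<mu> l s \<longleftrightarrow>
     (\<forall>p1 q1 p2 q2 :: int.
        R \<one>\<^bsub>G\<^esub> (\<mu> [^]\<^bsub>G\<^esub> p1 \<otimes>\<^bsub>G\<^esub> l [^]\<^bsub>G\<^esub> q1) \<and>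
        (of_int p1 * snd s - of_int q1 * fst s) * (of_int p2 * snd s - of_int q2 * fst s) > 0
        \<longrightarrow> R \<one>\<^bsub>G\<^esub> (\<mu> [^]\<^bsub>G\<^esub> p2 \<otimes>\<^bsub>G\<^esub> l [^]\<^bsub>G\<^esub> q2))"

text \<open>A slope [p:q] in QP^1 is represented by a pair of coprime integers (p,q).\<close>
definition strongly_detected ::
  "('a, 'b) monoid_scheme \<Rightarrow> ('a \<Rightarrow> 'a \<Rightarrow> bool) \<Rightarrow> 'a \<Rightarrow> 'a \<Rightarrow> int \<times> int \<Rightarrow> bool" where
  "strongly_detected G R \<mu> l s \<longleftrightarrow>
     (\<forall>g\<in>carrier G. g \<otimes>\<^bsub>G\<^esub> (\<mu> [^]\<^bsub>G\<^esub> fst s \<otimes>\<^bsub>G\<^esub> l [^]\<^bsub>G\<^esub> snd s) \<otimes>\<^bsub>G\<^esub> inv\<^bsub>G\<^esub> g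
        \<in> residue_group G R)"

definition normal_closure :: "('a, 'b) monoid_scheme \<Rightarrow> 'a set \<Rightarrow> 'a set" where
  "normal_closure G S = generate G {g \<otimes>\<^bsub>G\<^esub> s \<otimes>\<^bsub>G\<^esub> inv\<^bsub>G\<^esub> g | g s. g \<in> carrier G \<and> s \<in> S}"

end

theory Submission
  imports Defs
begin


lemma ltp_residue_subgroup:
  fixes G (structure)
  assumes G: "group G" and R: "left_total_preorder G R"
  shows "subgroup (residue_group G R) G"
proof -
  interpret group G by (rule G)
  from R have refl: "\<And>x. x \<in> carrier G \<Longrightarrow> R x x"
    and tr: "\<And>x y z. x \<in> carrier G \<Longrightarrow> y \<in> carrier G \<Longrightarrow> z \<in> carrier G \<Longrightarrow> R x y \<Longrightarrow> R y z \<Longrightarrow> R x z"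
    and lm: "\<And>g x y. g \<in> carrier G \<Longrightarrow> x \<in> carrier G \<Longrightarrow> y \<in> carrier G \<Longrightarrow> R x y \<Longrightarrow> R (g \<otimes> x) (g \<otimes> y)"
    unfolding left_total_preorder_def by blast+
  show ?thesis
  proof (rule subgroupI)
    show "residue_group G R \<subseteq> carrier G" unfolding residue_group_def by auto
    show "residue_group G R \<noteq> {}" unfolding residue_group_def using refl by auto
  next
    fix a assume a: "a \<in> residue_group G R"
    hence ac: "a \<in> carrier G" and a1: "R a \<one>" and a2: "R \<one> a" unfolding residue_group_def by auto
    have "R (inv a \<otimes> a) (inv a \<otimes> \<one>)" using lm[OF inv_closed[OF ac] ac one_closed a1] .
    hence b1: "R \<one> (inv a)" using ac by simp
    have "R (inv a \<otimes> \<one>) (inv a \<otimes> a)" using lm[OF inv_closed[OF ac] one_closed ac a2] .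
    hence b2: "R (inv a) \<one>" using ac by simp
    show "inv a \<in> residue_group G R" unfolding residue_group_def using b1 b2 ac by auto
  next
    fix a b assume a: "a \<in> residue_group G R" and b: "b \<in> residue_group G R"
    hence ac: "a \<in> carrier G" and a1: "R a \<one>" and a2: "R \<one> a"
      and bc: "b \<in> carrier G" and b1: "R b \<one>" and b2: "R \<one> b" unfolding residue_group_def by auto
    have "R (a \<otimes> b) (a \<otimes> \<one>)" using lm[OF ac bc one_closed b1] .
    hence c1: "R (a \<otimes> b) \<one>" using tr[OF _ ac one_closed _ a1] ac bc by simp
    have "R (a \<otimes> \<one>) (a \<otimes> b)" using lm[OF ac one_closed bc b2] .
    hence c2: "R \<one> (a \<otimes> b)" using tr[OF one_closed ac _ a2] ac bc by simp
    show "a \<otimes> b \<in> residue_group G R" unfolding residue_group_def using c1 c2 ac bc by auto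
  qed
qed

lemma rel_transfer:
  fixes G (structure)
  assumes G: "group G" and N: "N \<lhd> G" and R: "left_total_preorder G R"
    and NZ: "N \<subseteq> residue_group G R"
    and xc: "x \<in> carrier G" "x' \<in> carrier G" and yc: "y \<in> carrier G" "y' \<in> carrier G"
    and ex: "N #>\<^bsub>G\<^esub> x = N #>\<^bsub>G\<^esub> x'" and ey: "N #>\<^bsub>G\<^esub> y = N #>\<^bsub>G\<^esub> y'"
    and r: "R x y"
  shows "R x' y'"
proof -
  interpret normal N G by (rule N)
  from R have refl: "\<And>x. x \<in> carrier G \<Longrightarrow> R x x"
    and tr: "\<And>x y z. x \<in> carrier G \<Longrightarrow> y \<in> carrier G \<Longrightarrow> z \<in> carrier G \<Longrightarrow> R x y \<Longrightarrow> R y z \<Longrightarrow> R x z"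
    and lm: "\<And>g x y. g \<in> carrier G \<Longrightarrow> x \<in> carrier G \<Longrightarrow> y \<in> carrier G \<Longrightarrow> R x y \<Longrightarrow> R (g \<otimes> x) (g \<otimes> y)"
    unfolding left_total_preorder_def by blast+
  have key: "\<exists>m\<in>N. b = a \<otimes> m" if a: "a \<in> carrier G" and b: "b \<in> carrier G"
    and e: "N #> a = N #> b" for a b
  proof -
    have "b \<in> N #> a" using e b rcos_self[OF b is_subgroup] by simp
    then obtain n where n: "n \<in> N" "b = n \<otimes> a" unfolding r_coset_def by auto
    have nc: "n \<in> carrier G" using n(1) subset by auto
    have "inv a \<otimes> n \<otimes> a \<in> N" using inv_op_closed1[OF a n(1)] .
    moreover have "b = a \<otimes> (inv a \<otimes> n \<otimes> a)" using n(2) a nc by (simp add: m_assoc[symmetric])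
    ultimately show ?thesis by blast
  qed
  obtain m where m: "m \<in> N" "x = x' \<otimes> m" using key[OF xc(2) xc(1) ex[symmetric]] by blast
  obtain k where k: "k \<in> N" "y' = y \<otimes> k" using key[OF yc(1) yc(2) ey] by blast
  have mc: "m \<in> carrier G" and kc: "k \<in> carrier G" using m k subset by auto
  have m2: "R \<one> m" using m NZ unfolding residue_group_def by auto
  have k2: "R \<one> k" using k NZ unfolding residue_group_def by auto
  have "R (x' \<otimes> \<one>) (x' \<otimes> m)" using lm[OF xc(2) one_closed mc m2] .
  hence 1: "R x' x" using m xc by simp
  have "R (y \<otimes> \<one>) (y \<otimes> k)" using lm[OF yc(1) one_closed kc k2] .
  hence 2: "R y y'" using k yc by simp
  show ?thesis using tr[OF xc(2) xc(1) yc(2) 1 tr[OF xc(1) yc(1) yc(2) r 2]] .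
qed

lemma main_aux:
  fixes G :: "('a, 'b) monoid_scheme" (structure)
    and I :: "'i set" and \<mu>I lI :: "'i \<Rightarrow> 'a" and sI :: "'i \<Rightarrow> real \<times> real"
    and J :: "'j set" and \<mu>J lJ :: "'j \<Rightarrow> 'a" and sJ :: "'j \<Rightarrow> int \<times> int"
    and j0 :: 'j and p q :: int
  assumes "group G"
    and "\<forall>i\<in>I. \<mu>I i \<in> carrier G \<and> lI i \<in> carrier G \<and> \<mu>I i \<otimes>\<^bsub>G\<^esub> lI i = lI i \<otimes>\<^bsub>G\<^esub> \<mu>I i"
    and "\<forall>j\<in>J. \<mu>J j \<in> carrier G \<and> lJ j \<in> carrier G \<and> \<mu>J j \<otimes>\<^bsub>G\<^esub> lJ j = lJ j \<otimes>\<^bsub>G\<^esub> \<mu>J j"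
    and "j0 \<in> J"
    and "coprime p q"
    and "\<forall>i\<in>I. sI i \<noteq> (0, 0)"
    and "\<forall>j\<in>J. coprime (fst (sJ j)) (snd (sJ j))"
    and "sJ j0 = (p, q)"
  shows "(\<exists>R0. left_total_preorder G R0 \<and>
            (\<forall>i\<in>I. weakly_detected G R0 (\<mu>I i) (lI i) (sI i)) \<and>
            (\<forall>j\<in>J. strongly_detected G R0 (\<mu>J j) (lJ j) (sJ j)))
     \<longleftrightarrow>
     (let N = normal_closure G {\<mu>J j0 [^]\<^bsub>G\<^esub> p \<otimes>\<^bsub>G\<^esub> lJ j0 [^]\<^bsub>G\<^esub> q} in
      \<exists>R. left_total_preorder (G Mod N) R \<and>
            (\<forall>i\<in>I. weakly_detected (G Mod N) R (N #>\<^bsub>G\<^esub> \<mu>I i) (N #>\<^bsub>G\<^esub> lI i) (sI i)) \<and>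
            (\<forall>j\<in>J - {j0}. strongly_detected (G Mod N) R (N #>\<^bsub>G\<^esub> \<mu>J j) (N #>\<^bsub>G\<^esub> lJ j) (sJ j)))"
proof -
  interpret group G by (rule assms(1))
  define c where "c = \<mu>J j0 [^] p \<otimes> lJ j0 [^] q"
  define S where "S = {g \<otimes> s \<otimes> inv g | g s. g \<in> carrier G \<and> s \<in> {c}}"
  define N where "N = normal_closure G {c}"
  have cc: "c \<in> carrier G" unfolding c_def using assms(3,4) by auto
  have Sc: "S \<subseteq> carrier G" unfolding S_def using cc by auto
  have NS: "N = generate G S" unfolding N_def S_def normal_closure_def by simp
  have Nn: "N \<lhd> G" unfolding NS
  proof (rule normal_generateI[OF Sc])
    fix h g assume h: "h \<in> S" and g: "g \<in> carrier G"
    then obtain k where k: "k \<in> carrier G" "h = k \<otimes> c \<otimes> inv k" unfolding S_def by auto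
    have "g \<otimes> h \<otimes> inv g = (g \<otimes> k) \<otimes> c \<otimes> inv (g \<otimes> k)"
      using k g cc by (simp add: m_assoc inv_mult_group)
    thus "g \<otimes> h \<otimes> inv g \<in> S" unfolding S_def using g k by auto
  qed
  interpret normal N G by (rule Nn)
  define Q where "Q = G Mod N"
  define \<rho> where "\<rho> = (\<lambda>x. N #> x)"
  have Qg: "group Q" unfolding Q_def by (rule factorgroup_is_group)
  interpret h: group_hom G Q \<rho>
    unfolding group_hom_def group_hom_axioms_def Q_def \<rho>_def
    using r_coset_hom_Mod factorgroup_is_group is_group by blast
  have carQ: "carrier Q = \<rho> ` carrier G" unfolding Q_def \<rho>_def by (rule carrier_FactGroup)
  have rhoc: "\<rho> x \<in> carrier Q" if "x \<in> carrier G" for x using that carQ by auto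
  have SN: "S \<subseteq> N" unfolding NS by (auto intro: generate.incl)
  have conjN: "g \<otimes> c \<otimes> inv g \<in> N" if "g \<in> carrier G" for g using SN that unfolding S_def by auto
  have rho_mul: "\<rho> (x \<otimes> y) = \<rho> x \<otimes>\<^bsub>Q\<^esub> \<rho> y" if "x \<in> carrier G" "y \<in> carrier G" for x y
    using that by simp
  have rho_one: "\<rho> \<one> = \<one>\<^bsub>Q\<^esub>" by simp
  have rho_pow: "\<rho> (x [^] (k::int)) = \<rho> x [^]\<^bsub>Q\<^esub> k" if "x \<in> carrier G" for x k
    using that h.hom_int_pow by simp
  have rho_inv: "\<rho> (inv x) = inv\<^bsub>Q\<^esub> (\<rho> x)" if "x \<in> carrier G" for x
    using that by simp
  have rho_N: "\<rho> n = \<one>\<^bsub>Q\<^esub>" if "n \<in> N" for n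
    using that rcos_const[OF is_group] unfolding \<rho>_def Q_def by simp
  have pw: "\<rho> (a [^] (k1::int) \<otimes> b [^] (k2::int)) = \<rho> a [^]\<^bsub>Q\<^esub> k1 \<otimes>\<^bsub>Q\<^esub> \<rho> b [^]\<^bsub>Q\<^esub> k2"
    if "a \<in> carrier G" "b \<in> carrier G" for a b k1 k2
    using that by (simp add: rho_pow)
  have conjQ: "\<rho> (g \<otimes> z \<otimes> inv g) = \<rho> g \<otimes>\<^bsub>Q\<^esub> \<rho> z \<otimes>\<^bsub>Q\<^esub> inv\<^bsub>Q\<^esub> (\<rho> g)"
    if "g \<in> carrier G" "z \<in> carrier G" for g z
    using that by simp
  have lhs: "?thesis \<longleftrightarrow> ((\<exists>R0. left_total_preorder G R0 \<and>
            (\<forall>i\<in>I. weakly_detected G R0 (\<mu>I i) (lI i) (sI i)) \<and>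
            (\<forall>j\<in>J. strongly_detected G R0 (\<mu>J j) (lJ j) (sJ j)))
     \<longleftrightarrow>
      (\<exists>R. left_total_preorder Q R \<and>
            (\<forall>i\<in>I. weakly_detected Q R (\<rho> (\<mu>I i)) (\<rho> (lI i)) (sI i)) \<and>
            (\<forall>j\<in>J - {j0}. strongly_detected Q R (\<rho> (\<mu>J j)) (\<rho> (lJ j)) (sJ j))))"
    unfolding Q_def \<rho>_def N_def c_def Let_def by simp
  show ?thesis unfolding lhs
  proof
    assume "\<exists>R0. left_total_preorder G R0 \<and>
            (\<forall>i\<in>I. weakly_detected G R0 (\<mu>I i) (lI i) (sI i)) \<and>
            (\<forall>j\<in>J. strongly_detected G R0 (\<mu>J j) (lJ j) (sJ j))"
    then obtain R0 where R0: "left_total_preorder G R0"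
      and W: "\<forall>i\<in>I. weakly_detected G R0 (\<mu>I i) (lI i) (sI i)"
      and St: "\<forall>j\<in>J. strongly_detected G R0 (\<mu>J j) (lJ j) (sJ j)" by blast
    have Zs: "subgroup (residue_group G R0) G" by (rule ltp_residue_subgroup[OF is_group R0])
    have "S \<subseteq> residue_group G R0"
    proof
      fix h assume "h \<in> S"
      then obtain g where g: "g \<in> carrier G" "h = g \<otimes> c \<otimes> inv g" unfolding S_def by auto
      show "h \<in> residue_group G R0" using St assms(4,8) g unfolding strongly_detected_def c_def by auto
    qed
    hence NZ: "N \<subseteq> residue_group G R0" unfolding NS by (rule generate_subgroup_incl[OF _ Zs])
    define R where "R = (\<lambda>A B. \<exists>x\<in>carrier G. \<exists>y\<in>carrier G. A = \<rho> x \<and> B = \<rho> y \<and> R0 x y)"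
    have Req: "R (\<rho> x) (\<rho> y) \<longleftrightarrow> R0 x y" if "x \<in> carrier G" "y \<in> carrier G" for x y
    proof
      assume "R (\<rho> x) (\<rho> y)"
      then obtain x' y' where "x' \<in> carrier G" "y' \<in> carrier G" "\<rho> x = \<rho> x'" "\<rho> y = \<rho> y'" "R0 x' y'"
        unfolding R_def by blast
      thus "R0 x y" using rel_transfer[OF is_group Nn R0 NZ, of x' x y' y] that unfolding \<rho>_def by simp
    next
      assume "R0 x y" thus "R (\<rho> x) (\<rho> y)" unfolding R_def using that by blast
    qed
    have allQ: "(\<forall>A\<in>carrier Q. P A) \<longleftrightarrow> (\<forall>x\<in>carrier G. P (\<rho> x))" for P using carQ by auto
    have "left_total_preorder Q R"
    proof -
      from R0 have refl: "\<And>x. x \<in> carrier G \<Longrightarrow> R0 x x"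
        and tr: "\<And>x y z. x \<in> carrier G \<Longrightarrow> y \<in> carrier G \<Longrightarrow> z \<in> carrier G \<Longrightarrow> R0 x y \<Longrightarrow> R0 y z \<Longrightarrow> R0 x z"
        and tot: "\<And>x y. x \<in> carrier G \<Longrightarrow> y \<in> carrier G \<Longrightarrow> R0 x y \<or> R0 y x"
        and lm: "\<And>g x y. g \<in> carrier G \<Longrightarrow> x \<in> carrier G \<Longrightarrow> y \<in> carrier G \<Longrightarrow> R0 x y \<Longrightarrow> R0 (g \<otimes> x) (g \<otimes> y)"
        and np: "\<not> (\<forall>x\<in>carrier G. \<forall>y\<in>carrier G. R0 x y)"
        unfolding left_total_preorder_def by blast+
      have lmQ: "R (\<rho> g \<otimes>\<^bsub>Q\<^esub> \<rho> x) (\<rho> g \<otimes>\<^bsub>Q\<^esub> \<rho> y)"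
        if "g \<in> carrier G" "x \<in> carrier G" "y \<in> carrier G" "R (\<rho> x) (\<rho> y)" for g x y
      proof -
        have "R0 x y" using that Req by blast
        hence "R0 (g \<otimes> x) (g \<otimes> y)" using that lm by blast
        hence "R (\<rho> (g \<otimes> x)) (\<rho> (g \<otimes> y))" using that Req[of "g \<otimes> x" "g \<otimes> y"] by blast
        thus ?thesis using that by (simp only: rho_mul)
      qed
      show ?thesis unfolding left_total_preorder_def allQ
      proof (intro conjI)
        show "\<forall>x\<in>carrier G. R (\<rho> x) (\<rho> x)" using refl Req by blast
        show "\<forall>x\<in>carrier G. \<forall>y\<in>carrier G. \<forall>z\<in>carrier G. R (\<rho> x) (\<rho> y) \<longrightarrow> R (\<rho> y) (\<rho> z) \<longrightarrow> R (\<rho> x) (\<rho> z)"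
          using tr Req by blast
        show "\<forall>x\<in>carrier G. \<forall>y\<in>carrier G. R (\<rho> x) (\<rho> y) \<or> R (\<rho> y) (\<rho> x)"
          using tot Req by blast
        show "\<forall>g\<in>carrier G. \<forall>x\<in>carrier G. \<forall>y\<in>carrier G. R (\<rho> x) (\<rho> y) \<longrightarrow> R (\<rho> g \<otimes>\<^bsub>Q\<^esub> \<rho> x) (\<rho> g \<otimes>\<^bsub>Q\<^esub> \<rho> y)"
          using lmQ by blast
        show "\<not> (\<forall>x\<in>carrier G. \<forall>y\<in>carrier G. R (\<rho> x) (\<rho> y))"
          using np Req by blast
      qed
    qed
    moreover have "\<forall>i\<in>I. weakly_detected Q R (\<rho> (\<mu>I i)) (\<rho> (lI i)) (sI i)"
    proof
      fix i assume i: "i \<in> I"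
      hence "\<mu>I i \<in> carrier G" "lI i \<in> carrier G" using assms(2) by auto
      thus "weakly_detected Q R (\<rho> (\<mu>I i)) (\<rho> (lI i)) (sI i)"
        using W i unfolding weakly_detected_def
        by (simp del: h.hom_mult h.hom_one h.hom_inv add: pw[symmetric] rho_one[symmetric] Req)
    qed
    moreover have "\<forall>j\<in>J - {j0}. strongly_detected Q R (\<rho> (\<mu>J j)) (\<rho> (lJ j)) (sJ j)"
    proof
      fix j assume j: "j \<in> J - {j0}"
      hence jc: "\<mu>J j \<in> carrier G" "lJ j \<in> carrier G" using assms(3) by auto
      show "strongly_detected Q R (\<rho> (\<mu>J j)) (\<rho> (lJ j)) (sJ j)"
        using St j jc unfolding strongly_detected_def residue_group_def allQ
        by (simp del: h.hom_mult h.hom_one h.hom_inv add: pw[symmetric] rho_one[symmetric] conjQ[symmetric] Req rhoc)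
    qed
    ultimately show "\<exists>R. left_total_preorder Q R \<and>
            (\<forall>i\<in>I. weakly_detected Q R (\<rho> (\<mu>I i)) (\<rho> (lI i)) (sI i)) \<and>
            (\<forall>j\<in>J - {j0}. strongly_detected Q R (\<rho> (\<mu>J j)) (\<rho> (lJ j)) (sJ j))" by blast
  next
    assume "\<exists>R. left_total_preorder Q R \<and>
            (\<forall>i\<in>I. weakly_detected Q R (\<rho> (\<mu>I i)) (\<rho> (lI i)) (sI i)) \<and>
            (\<forall>j\<in>J - {j0}. strongly_detected Q R (\<rho> (\<mu>J j)) (\<rho> (lJ j)) (sJ j))"
    then obtain R where R: "left_total_preorder Q R"
      and W: "\<forall>i\<in>I. weakly_detected Q R (\<rho> (\<mu>I i)) (\<rho> (lI i)) (sI i)"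
      and St: "\<forall>j\<in>J - {j0}. strongly_detected Q R (\<rho> (\<mu>J j)) (\<rho> (lJ j)) (sJ j)" by blast
    define R0 where "R0 = (\<lambda>x y. R (\<rho> x) (\<rho> y))"
    have allQ: "(\<forall>A\<in>carrier Q. P A) \<longleftrightarrow> (\<forall>x\<in>carrier G. P (\<rho> x))" for P using carQ by auto
    have "left_total_preorder G R0"
    proof -
      from R have refl: "\<And>x. x \<in> carrier Q \<Longrightarrow> R x x"
        and tr: "\<And>x y z. x \<in> carrier Q \<Longrightarrow> y \<in> carrier Q \<Longrightarrow> z \<in> carrier Q \<Longrightarrow> R x y \<Longrightarrow> R y z \<Longrightarrow> R x z"
        and tot: "\<And>x y. x \<in> carrier Q \<Longrightarrow> y \<in> carrier Q \<Longrightarrow> R x y \<or> R y x"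
        and lm: "\<And>g x y. g \<in> carrier Q \<Longrightarrow> x \<in> carrier Q \<Longrightarrow> y \<in> carrier Q \<Longrightarrow> R x y \<Longrightarrow> R (g \<otimes>\<^bsub>Q\<^esub> x) (g \<otimes>\<^bsub>Q\<^esub> y)"
        and np: "\<not> (\<forall>x\<in>carrier Q. \<forall>y\<in>carrier Q. R x y)"
        unfolding left_total_preorder_def by blast+
      have np': "\<not> (\<forall>x\<in>carrier G. \<forall>y\<in>carrier G. R (\<rho> x) (\<rho> y))"
        using np unfolding allQ by assumption
      have lm': "R (\<rho> (g \<otimes> x)) (\<rho> (g \<otimes> y))"
        if "g \<in> carrier G" "x \<in> carrier G" "y \<in> carrier G" "R (\<rho> x) (\<rho> y)" for g x y
      proof -
        have "R (\<rho> g \<otimes>\<^bsub>Q\<^esub> \<rho> x) (\<rho> g \<otimes>\<^bsub>Q\<^esub> \<rho> y)" using lm[OF rhoc[OF that(1)] rhoc[OF that(2)] rhoc[OF that(3)] that(4)] .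
        thus ?thesis using that by (simp only: rho_mul)
      qed
      show ?thesis unfolding left_total_preorder_def R0_def
      proof (intro conjI)
        show "\<forall>x\<in>carrier G. R (\<rho> x) (\<rho> x)" using refl rhoc by blast
        show "\<forall>x\<in>carrier G. \<forall>y\<in>carrier G. \<forall>z\<in>carrier G. R (\<rho> x) (\<rho> y) \<longrightarrow> R (\<rho> y) (\<rho> z) \<longrightarrow> R (\<rho> x) (\<rho> z)"
          using tr rhoc by blast
        show "\<forall>x\<in>carrier G. \<forall>y\<in>carrier G. R (\<rho> x) (\<rho> y) \<or> R (\<rho> y) (\<rho> x)"
          using tot rhoc by blast
        show "\<forall>g\<in>carrier G. \<forall>x\<in>carrier G. \<forall>y\<in>carrier G. R (\<rho> x) (\<rho> y) \<longrightarrow> R (\<rho> (g \<otimes> x)) (\<rho> (g \<otimes> y))"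
          using lm' by blast
        show "\<not> (\<forall>x\<in>carrier G. \<forall>y\<in>carrier G. R (\<rho> x) (\<rho> y))" by (rule np')
      qed
    qed
    moreover have "\<forall>i\<in>I. weakly_detected G R0 (\<mu>I i) (lI i) (sI i)"
    proof
      fix i assume i: "i \<in> I"
      hence "\<mu>I i \<in> carrier G" "lI i \<in> carrier G" using assms(2) by auto
      thus "weakly_detected G R0 (\<mu>I i) (lI i) (sI i)"
        using W i unfolding weakly_detected_def R0_def
        by (simp add: pw rho_pow)
    qed
    moreover have "\<forall>j\<in>J. strongly_detected G R0 (\<mu>J j) (lJ j) (sJ j)"
    proof
      fix j assume j: "j \<in> J"
      hence jc: "\<mu>J j \<in> carrier G" "lJ j \<in> carrier G" using assms(3) by auto
      show "strongly_detected G R0 (\<mu>J j) (lJ j) (sJ j)"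
      proof (cases "j = j0")
        case True
        have "R \<one>\<^bsub>Q\<^esub> \<one>\<^bsub>Q\<^esub>" using R h.H.one_closed unfolding left_total_preorder_def by blast
        thus ?thesis using True conjN assms(8) unfolding strongly_detected_def residue_group_def R0_def c_def
          by (auto simp: rho_N cc)
      next
        case False
        thus ?thesis
          using St j jc unfolding strongly_detected_def residue_group_def allQ R0_def
          by (simp add: pw conjQ rhoc rho_pow)
      qed
    qed
    ultimately show "\<exists>R0. left_total_preorder G R0 \<and>
            (\<forall>i\<in>I. weakly_detected G R0 (\<mu>I i) (lI i) (sI i)) \<and>
            (\<forall>j\<in>J. strongly_detected G R0 (\<mu>J j) (lJ j) (sJ j))" by blast
  qed
qed


theorem theorem2p3:
  fixes G :: "('a, 'b) monoid_scheme"
    and I :: "'i set" and \<mu>I lI :: "'i \<Rightarrow> 'a" and sI :: "'i \<Rightarrow> real \<times> real"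
    and J :: "'j set" and \<mu>J lJ :: "'j \<Rightarrow> 'a" and sJ :: "'j \<Rightarrow> int \<times> int"
    and j0 :: 'j and p q :: int
  assumes "group G"
    and "\<forall>i\<in>I. \<mu>I i \<in> carrier G \<and> lI i \<in> carrier G \<and> \<mu>I i \<otimes>\<^bsub>G\<^esub> lI i = lI i \<otimes>\<^bsub>G\<^esub> \<mu>I i"
    and "\<forall>j\<in>J. \<mu>J j \<in> carrier G \<and> lJ j \<in> carrier G \<and> \<mu>J j \<otimes>\<^bsub>G\<^esub> lJ j = lJ j \<otimes>\<^bsub>G\<^esub> \<mu>J j"
    and "j0 \<in> J"
    and "coprime p q"
    and "\<forall>i\<in>I. sI i \<noteq> (0, 0)"
    and "\<forall>j\<in>J. coprime (fst (sJ j)) (snd (sJ j))"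
    and "sJ j0 = (p, q)"
  shows "(\<exists>R0. left_total_preorder G R0 \<and>
            (\<forall>i\<in>I. weakly_detected G R0 (\<mu>I i) (lI i) (sI i)) \<and>
            (\<forall>j\<in>J. strongly_detected G R0 (\<mu>J j) (lJ j) (sJ j)))
     \<longleftrightarrow>
     (let N = normal_closure G {\<mu>J j0 [^]\<^bsub>G\<^esub> p \<otimes>\<^bsub>G\<^esub> lJ j0 [^]\<^bsub>G\<^esub> q} in
      \<exists>R. left_total_preorder (G Mod N) R \<and>
            (\<forall>i\<in>I. weakly_detected (G Mod N) R (N #>\<^bsub>G\<^esub> \<mu>I i) (N #>\<^bsub>G\<^esub> lI i) (sI i)) \<and>
            (\<forall>j\<in>J - {j0}. strongly_detected (G Mod N) R (N #>\<^bsub>G\<^esub> \<mu>J j) (N #>\<^bsub>G\<^esub> lJ j) (sJ j)))"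
  using assms by (rule main_aux)

end
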